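(* Let $K\ge2$, $r\in[0,1]^K$, $a^*\in\arg\max_{a\in[K]}r(a)$, and $\Delta := r(a^* )-\max_{a\ne a^*}r(a)$. Then for any probability vector $\pi$ on $[K]$, $$\sum_{i=1}^K\pi(i)^2\left|r(i)-\pi^\top r\right|^3\ge\frac{\Delta}{K-1}\,\pi(a^* )^2\left(r(a^* )-\pi^\top r\right)^2.$$ *)

theory Defs
  imports Main "HOL.Real"
begin

end

theory Submission
  imports Defs "HOL-Analysis.Analysis"
begin

lemma hlp: "(D::real) / c * x * y = (D - d) * (x * y / c) + d * (x * y / c)"
  by (cases "c = 0") (simp_all add: field_simps)

theorem lemma16:
  fixes K :: nat and r \<pi> :: "nat \<Rightarrow> real" and astar :: nat
  assumes "K \<ge> 2"
    and "\<And>a. a \<in> {1..K} \<Longrightarrow> 0 \<le> r a \<and> r a \<le> 1"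
    and "astar \<in> {1..K}"
    and "\<And>a. a \<in> {1..K} \<Longrightarrow> r a \<le> r astar"
    and "\<And>i. i \<in> {1..K} \<Longrightarrow> \<pi> i \<ge> 0"
    and "(\<Sum>i=1..K. \<pi> i) = 1"
  shows "(\<Sum>i=1..K. (\<pi> i)^2 * \<bar>r i - (\<Sum>j=1..K. \<pi> j * r j)\<bar>^3)
     \<ge> (r astar - Max {r a | a. a \<in> {1..K} \<and> a \<noteq> astar}) / real (K - 1)
        * (\<pi> astar)^2 * (r astar - (\<Sum>j=1..K. \<pi> j * r j))^2"
proof -
  define S where "S = {1..K} - {astar}"
  define m where "m = (\<Sum>j=1..K. \<pi> j * r j)"
  define M where "M = Max {r a | a. a \<in> {1..K} \<and> a \<noteq> astar}"
  define p where "p = \<pi> astar"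
  define d where "d = r astar - m"
  define D where "D = r astar - M"
  have fS: "finite S" by (simp add: S_def)
  have cS: "card S = K - 1" using assms(3) by (simp add: S_def)
  have setS: "{r a | a. a \<in> {1..K} \<and> a \<noteq> astar} = r ` S" by (auto simp: S_def)
  have Sne: "S \<noteq> {}" using cS assms(1) by auto
  have MS: "\<And>i. i \<in> S \<Longrightarrow> r i \<le> M" unfolding M_def setS using fS by simp
  have "M \<in> r ` S" unfolding M_def setS using fS Sne by (intro Max_in) auto
  then have D0: "D \<ge> 0" using assms(4) by (auto simp: D_def S_def)
  have split: "\<And>f. (\<Sum>i=1..K. f i) = f astar + (\<Sum>i\<in>S. f i)"
    using assms(3) by (simp add: S_def sum.remove)
  have "(\<Sum>i=1..K. \<pi> i * (r i - m)) = (\<Sum>i=1..K. \<pi> i * r i) - (\<Sum>i=1..K. \<pi> i) * m"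
    by (simp add: right_diff_distrib sum_subtractf sum_distrib_right)
  then have "(\<Sum>i=1..K. \<pi> i * (r i - m)) = 0" using assms(6) by (simp add: m_def)
  then have pd: "p * d = (\<Sum>i\<in>S. \<pi> i * (m - r i))"
    unfolding split p_def d_def by (simp add: right_diff_distrib sum_subtractf algebra_simps)
  have pos: "\<And>i. i \<in> S \<Longrightarrow> \<pi> i \<ge> 0" using assms(5) by (auto simp: S_def)
  have K1: "real (K - 1) \<ge> 1" using assms(1) by simp
  have rest0: "(\<Sum>i\<in>S. (\<pi> i)^2 * \<bar>r i - m\<bar>^3) \<ge> 0" by (intro sum_nonneg) simp
  have LHS: "(\<Sum>i=1..K. (\<pi> i)^2 * \<bar>r i - m\<bar>^3) = p^2 * \<bar>d\<bar>^3 + (\<Sum>i\<in>S. (\<pi> i)^2 * \<bar>r i - m\<bar>^3)"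
    unfolding split p_def d_def by (simp add: abs_minus_commute)
  have goal: "(\<Sum>i=1..K. (\<pi> i)^2 * \<bar>r i - m\<bar>^3) \<ge> D / real (K - 1) * p^2 * d^2"
  proof (cases "d \<ge> D")
    case True
    have "D / real (K - 1) * p^2 * d^2 \<le> D * p^2 * d^2"
      using D0 K1 by (intro mult_right_mono) (auto simp: divide_le_eq mult_le_cancel_left1 intro: mult_left_mono[where c=D and a=1, simplified])
    also have "\<dots> \<le> d * p^2 * d^2" using True by (intro mult_right_mono) auto
    also have "\<dots> = p^2 * \<bar>d\<bar>^3" using True D0 by (simp add: power2_eq_square power3_eq_cube)
    finally have "D / real (K - 1) * p^2 * d^2 \<le> p^2 * \<bar>d\<bar>^3" .
    then show ?thesis unfolding LHS using rest0 by simp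
  next
    case False
    have d0: "d \<ge> 0" using assms(4) assms(5) assms(6) unfolding d_def m_def
    proof -
      have "(\<Sum>j=1..K. \<pi> j * r j) \<le> (\<Sum>j=1..K. \<pi> j * r astar)"
        by (intro sum_mono mult_left_mono) (auto simp: assms(4) assms(5))
      also have "\<dots> = (\<Sum>j=1..K. \<pi> j) * r astar" by (rule sum_distrib_right[symmetric])
      also have "\<dots> = r astar" using assms(6) by simp
      finally show "0 \<le> r astar - (\<Sum>j = 1..K. \<pi> j * r j)" by simp
    qed
    have xi: "\<And>i. i \<in> S \<Longrightarrow> m - r i \<ge> D - d" using MS by (simp add: D_def d_def)
    have "(p*d)^2 \<le> (\<Sum>i\<in>S. (\<pi> i * (m - r i))^2) * real (K - 1)"
      unfolding pd using sum_squared_le_sum_of_squares[of "\<lambda>i. \<pi> i * (m - r i)" S] cS by simp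
    then have cs: "p^2 * d^2 / real (K - 1) \<le> (\<Sum>i\<in>S. (\<pi> i * (m - r i))^2)"
      using K1 by (simp add: pos_divide_le_eq power_mult_distrib)
    have "(D - d) * (\<Sum>i\<in>S. (\<pi> i * (m - r i))^2) = (\<Sum>i\<in>S. (D - d) * (\<pi> i * (m - r i))^2)"
      by (simp add: sum_distrib_left)
    also have "\<dots> \<le> (\<Sum>i\<in>S. (\<pi> i)^2 * \<bar>r i - m\<bar>^3)"
    proof (intro sum_mono)
      fix i assume i: "i \<in> S"
      have a: "\<bar>r i - m\<bar> = m - r i" using xi[OF i] False by simp
      have "(D - d) * (\<pi> i * (m - r i))^2 \<le> (m - r i) * (\<pi> i * (m - r i))^2"
        using xi[OF i] by (intro mult_right_mono) auto
      then show "(D - d) * (\<pi> i * (m - r i))^2 \<le> (\<pi> i)^2 * \<bar>r i - m\<bar>^3"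
        unfolding a by (simp add: power2_eq_square power3_eq_cube algebra_simps)
    qed
    finally have r1: "(D - d) * (\<Sum>i\<in>S. (\<pi> i * (m - r i))^2) \<le> (\<Sum>i\<in>S. (\<pi> i)^2 * \<bar>r i - m\<bar>^3)" .
    have r2: "(D - d) * (p^2 * d^2 / real (K - 1)) \<le> (D - d) * (\<Sum>i\<in>S. (\<pi> i * (m - r i))^2)"
      using cs False by (intro mult_left_mono) auto
    have r3: "d * (p^2 * d^2 / real (K - 1)) \<le> p^2 * \<bar>d\<bar>^3"
    proof -
      have pp: "p^2 * d^2 \<ge> 0" by simp
      have "p^2 * d^2 / real (K - 1) \<le> p^2 * d^2 / 1" using K1 pp
        by (intro divide_left_mono) auto
      then have "p^2 * d^2 / real (K - 1) \<le> p^2 * d^2" by simp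
      then have "d * (p^2 * d^2 / real (K - 1)) \<le> d * (p^2 * d^2)" using d0 by (rule mult_left_mono)
      then show ?thesis using d0 by (simp add: power2_eq_square power3_eq_cube algebra_simps)
    qed
    have "D / real (K - 1) * p^2 * d^2 = (D - d) * (p^2 * d^2 / real (K - 1)) + d * (p^2 * d^2 / real (K - 1))"
      by (rule hlp)
    then show ?thesis unfolding LHS using r1 r2 r3 by simp
  qed
  then show ?thesis unfolding m_def M_def D_def p_def d_def by simp
qed

end
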